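(* Let $\Gamma$ be a quantum graph with $N$ internal edges of lengths $\ell_j=\ell_j(t)$ ($C^2$ in $t$, at least some non-constant near $t=0$) and external half-lines, with general self-adjoint vertex coupling, having at $t=0$ an embedded eigenvalue $k_0^2>0$, and let $k=k(t)$ be the solution near $k_0$ of the resonance condition $\sum_{\bar\gamma}(-1)^{m_{\bar\gamma}}A_{\bar\gamma}(k)\mathrm{e}^{ik\ell_{\bar\gamma}(t)}=0$ for small $t$. Assume that all the coefficients $A_{\bar\gamma}$ are $k$-independent and real. Then (at $t=0$, $k=k_0$) $$\dot k = -k\, \frac{\sum_{\bar\gamma}\dot \ell_{\bar\gamma}(-1)^{m_{\bar\gamma}}A_{\bar\gamma}\cos{k\ell_{\bar\gamma}}}{\sum_{\bar\gamma}\ell_{\bar\gamma}(-1)^{m_{\bar\gamma}}A_{\bar\gamma}\cos{k\ell_{\bar\gamma}}},$$ and, with $C=\sum_{\bar\gamma}\ell_{\bar\gamma}(-1)^{m_{\bar\gamma}}A_{\bar\gamma}\cos k\ell_{\bar\gamma}$, $S=\sum_{\bar\gamma}\ell_{\bar\gamma}(-1)^{m_{\bar\gamma}}A_{\bar\gamma}\sin k\ell_{\bar\gamma}$, $d=C^2+S^2$, $$X=2\dot k \sum_{\bar\gamma} (k \dot \ell_{\bar\gamma}\ell_{\bar\gamma}\cos{k\ell_{\bar\gamma}}+\dot \ell_{\bar\gamma}\sin{k\ell_{\bar\gamma}})A_{\bar\gamma}(-1)^{m_{\bar\gamma}}+(\dot k)^2\sum_{\bar\gamma}\ell_{\bar\gamma}^2(-1)^{m_{\bar\gamma}}A_{\bar\gamma}\cos{k\ell_{\bar\gamma}}+k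 \sum_{\bar\gamma}(k(\dot\ell_{\bar\gamma})^2\cos{k\ell_{\bar\gamma}}+\ddot\ell_{\bar\gamma}\sin{k\ell_{\bar\gamma}})(-1)^{m_{\bar\gamma}}A_{\bar\gamma},$$ $$Y=2\dot k \sum_{\bar\gamma} (-k \dot \ell_{\bar\gamma}\ell_{\bar\gamma}\sin{k\ell_{\bar\gamma}}+\dot \ell_{\bar\gamma}\cos{k\ell_{\bar\gamma}})A_{\bar\gamma}(-1)^{m_{\bar\gamma}}-(\dot k)^2\sum_{\bar\gamma}\ell_{\bar\gamma}^2(-1)^{m_{\bar\gamma}}A_{\bar\gamma}\sin{k\ell_{\bar\gamma}}+k \sum_{\bar\gamma}(\ddot\ell_{\bar\gamma}\cos{k\ell_{\bar\gamma}}-k(\dot\ell_{\bar\gamma})^2\sin{k\ell_{\bar\gamma}})(-1)^{m_{\bar\gamma}}A_{\bar\gamma},$$ one has $$\mathrm{Im\,}\ddot k=-\frac{C}{d}X+\frac{S}{d}Y,\qquad \mathrm{Re\,}\ddot k=-\frac{S}{d}X-\frac{C}{d}Y.$$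
   Context: Metric graph: internal edges identified with $(0,\ell_j)$, leads with $(0,\infty)$; Hamiltonian $-d^2/dx^2$ with coupling conditions $(U_v-I)\Psi_v+i(U_v+I)\Psi_v'=0$ at each vertex ($U_v$ unitary, $\Psi_v$ boundary values, $\Psi'_v$ outgoing derivatives). Effective vertex-scattering matrix $\tilde\sigma^{(v)}(k)$ at a vertex with $n$ internal edges: maps incoming amplitudes $a_j^{\mathrm{in}}$ to outgoing amplitudes $a_j^{\mathrm{out}}$ for $f_j(x)=a_j^{\mathrm{in}}\mathrm{e}^{-ikx}+a_j^{\mathrm{out}}\mathrm{e}^{ikx}$ on internal edges ($x=0$ at the vertex), with purely outgoing $b_s\mathrm{e}^{ikx}$ on the leads. Each internal edge gives two oppositely oriented bonds; $S_{b'b}$ is the $\tilde\sigma^{(v)}$ entry for passing from bond $b$ into bond $b'$ at the vertex $v$ where $b$ ends and $b'$ begins. For a periodic orbit $\gamma=(b_1,\dots,b_n)$, $A_\gamma=S_{b_2b_1}\cdots S_{b_1b_n}$, $\ell_\gamma=\sum\ell_{b_j}$. An irreducible pseudo-orbit $\bar\gamma$ is a collection of periodic orbits using no bond more than once (including the empty one with $A=1$, $\ell=0$, $m=0$); $A_{\bar\gamma}$ is the product of the $A_\gamma$, $\ell_{\bar\gamma}$ the sum of lengths, $m_{\bar\gamma}$ the number of orbits. Dots denote derivatives in $t$. *)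

theory Defs
  imports "HOL-Analysis.Analysis"
begin

text \<open>Irreducible pseudo-orbits are indexed by a finite set P; nb p j (0, 1 or 2)
  is the number of bonds of pseudo-orbit p lying on edge j (each bond used at
  most once, each edge carries two bonds).  m p is the number of periodic orbits
  of p and A p its (by assumption k-independent, real) coefficient.\<close>

definition po_len :: "nat \<Rightarrow> ('p \<Rightarrow> nat \<Rightarrow> nat) \<Rightarrow> (nat \<Rightarrow> real \<Rightarrow> real) \<Rightarrow> 'p \<Rightarrow> real \<Rightarrow> real" where
  "po_len N nb ell p t = (\<Sum>j<N. real (nb p j) * ell j t)"

definition res_cond :: "'p set \<Rightarrow> ('p \<Rightarrow> nat) \<Rightarrow> ('p \<Rightarrow> real) \<Rightarrow> ('p \<Rightarrow> real \<Rightarrow> real) \<Rightarrow> real \<Rightarrow> complex \<Rightarrow> complex" where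
  "res_cond P m A L t z = (\<Sum>p\<in>P. of_real ((-1) ^ m p * A p) * exp (\<i> * z * of_real (L p t)))"


text \<open>Quantities C, S, X, Y of the theorem, for given pseudo-orbit data:
  L p, Ld p, Ldd p are the length of p and its first two t-derivatives at t = 0,
  k0 the value of k and kd the (real) value of the t-derivative of k at t = 0.\<close>

definition C_sum :: "'p set \<Rightarrow> ('p \<Rightarrow> nat) \<Rightarrow> ('p \<Rightarrow> real) \<Rightarrow> ('p \<Rightarrow> real) \<Rightarrow> real \<Rightarrow> real" where
  "C_sum P m A L k0 = (\<Sum>p\<in>P. L p * (-1) ^ m p * A p * cos (k0 * L p))"

definition S_sum :: "'p set \<Rightarrow> ('p \<Rightarrow> nat) \<Rightarrow> ('p \<Rightarrow> real) \<Rightarrow> ('p \<Rightarrow> real) \<Rightarrow> real \<Rightarrow> real" where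
  "S_sum P m A L k0 = (\<Sum>p\<in>P. L p * (-1) ^ m p * A p * sin (k0 * L p))"

definition X_sum :: "'p set \<Rightarrow> ('p \<Rightarrow> nat) \<Rightarrow> ('p \<Rightarrow> real) \<Rightarrow> ('p \<Rightarrow> real) \<Rightarrow> ('p \<Rightarrow> real) \<Rightarrow> ('p \<Rightarrow> real) \<Rightarrow> real \<Rightarrow> real \<Rightarrow> real" where
  "X_sum P m A L Ld Ldd k0 kd =
     2 * kd * (\<Sum>p\<in>P. (k0 * Ld p * L p * cos (k0 * L p) + Ld p * sin (k0 * L p)) * A p * (-1) ^ m p)
     + kd\<^sup>2 * (\<Sum>p\<in>P. (L p)\<^sup>2 * (-1) ^ m p * A p * cos (k0 * L p))
     + k0 * (\<Sum>p\<in>P. (k0 * (Ld p)\<^sup>2 * cos (k0 * L p) + Ldd p * sin (k0 * L p)) * (-1) ^ m p * A p)"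

definition Y_sum :: "'p set \<Rightarrow> ('p \<Rightarrow> nat) \<Rightarrow> ('p \<Rightarrow> real) \<Rightarrow> ('p \<Rightarrow> real) \<Rightarrow> ('p \<Rightarrow> real) \<Rightarrow> ('p \<Rightarrow> real) \<Rightarrow> real \<Rightarrow> real \<Rightarrow> real" where
  "Y_sum P m A L Ld Ldd k0 kd =
     2 * kd * (\<Sum>p\<in>P. (- k0 * Ld p * L p * sin (k0 * L p) + Ld p * cos (k0 * L p)) * A p * (-1) ^ m p)
     - kd\<^sup>2 * (\<Sum>p\<in>P. (L p)\<^sup>2 * (-1) ^ m p * A p * sin (k0 * L p))
     + k0 * (\<Sum>p\<in>P. (Ldd p * cos (k0 * L p) - k0 * (Ld p)\<^sup>2 * sin (k0 * L p)) * (-1) ^ m p * A p)"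

end

theory Submission
  imports Defs
begin


lemma vd_exp:
  fixes f :: "real \<Rightarrow> complex"
  assumes "(f has_vector_derivative f') (at x)"
  shows "((\<lambda>t. exp (f t)) has_vector_derivative (exp (f x) * f')) (at x)"
proof -
  have "((exp \<circ> f) has_vector_derivative (f' * exp (f x))) (at x)"
    by (rule field_vector_diff_chain_at[OF assms]) (rule DERIV_exp)
  then show ?thesis by (simp add: o_def mult.commute)
qed
lemma vd_Im:
  fixes f :: "real \<Rightarrow> complex"
  assumes "(f has_vector_derivative f') (at x)"
  shows "((\<lambda>t. Im (f t)) has_real_derivative Im f') (at x)"
  using bounded_linear.has_vector_derivative[OF bounded_linear_Im assms]
  by (simp add: has_real_derivative_iff_has_vector_derivative)
lemma vd_polen:
  assumes "\<forall>j<N. (ell j has_real_derivative ell1 j t) (at t)"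
  shows "((\<lambda>t. complex_of_real (po_len N nb ell p t)) has_vector_derivative complex_of_real (po_len N nb ell1 p t)) (at t)"
  unfolding po_len_def
  apply (rule has_vector_derivative_of_real)
  apply (rule DERIV_sum)
  using assms by (auto intro!: derivative_eq_intros)

lemma exp_cs: "exp (\<i> * complex_of_real a * complex_of_real b) = complex_of_real (cos (a*b)) + \<i> * complex_of_real (sin (a*b))"
proof -
  have "exp (\<i> * complex_of_real a * complex_of_real b) = cis (a*b)"
    by (simp add: cis_conv_exp mult.assoc)
  then show ?thesis by (simp add: complex_eq_iff)
qed

theorem mainTheorem2:
  fixes N :: nat and P :: "'p set" and nb :: "'p \<Rightarrow> nat \<Rightarrow> nat"
    and m :: "'p \<Rightarrow> nat" and A :: "'p \<Rightarrow> real"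
    and ell ell1 ell2 :: "nat \<Rightarrow> real \<Rightarrow> real"
    and k k1 :: "real \<Rightarrow> complex" and k2 :: complex
    and k0 \<delta> :: real
  assumes finP: "finite P"
    and delta: "\<delta> > 0"
    and lengths: "\<forall>j<N. \<forall>t\<in>ball 0 \<delta>. ell j t > 0
                   \<and> (ell j has_real_derivative ell1 j t) (at t)
                   \<and> (ell1 j has_real_derivative ell2 j t) (at t)"
    and C2: "\<forall>j<N. continuous_on (ball 0 \<delta>) (ell2 j)"
    and nonconst: "\<exists>j<N. \<not> (\<exists>\<epsilon>>0. \<forall>t. \<bar>t\<bar> < \<epsilon> \<longrightarrow> ell j t = ell j 0)"
    and bonds: "\<forall>p\<in>P. \<forall>j<N. nb p j \<le> 2"
    and k0pos: "k0 > 0"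
    and kinit: "k 0 = complex_of_real k0"
    and reson: "\<forall>t\<in>ball 0 \<delta>. res_cond P m A (po_len N nb ell) t (k t) = 0"
    and lowerhalf: "\<forall>t\<in>ball 0 \<delta>. Im (k t) \<le> 0"
    and kder: "\<forall>t\<in>ball 0 \<delta>. (k has_vector_derivative k1 t) (at t)"
    and kder2: "(k1 has_vector_derivative k2) (at 0)"
    and nondeg: "(C_sum P m A (\<lambda>p. po_len N nb ell p 0) k0)\<^sup>2
                 + (S_sum P m A (\<lambda>p. po_len N nb ell p 0) k0)\<^sup>2 \<noteq> 0"
  shows "let L = (\<lambda>p. po_len N nb ell p 0); Ld = (\<lambda>p. po_len N nb ell1 p 0);
             Ldd = (\<lambda>p. po_len N nb ell2 p 0); kd = Re (k1 0);
             C = C_sum P m A L k0; S = S_sum P m A L k0; d = C\<^sup>2 + S\<^sup>2;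
             X = X_sum P m A L Ld Ldd k0 kd; Y = Y_sum P m A L Ld Ldd k0 kd
         in Im (k1 0) = 0
            \<and> (C \<noteq> 0 \<longrightarrow> k1 0 = complex_of_real
                  (- k0 * (\<Sum>p\<in>P. Ld p * (-1) ^ m p * A p * cos (k0 * L p)) / C))
            \<and> Im k2 = - C / d * X + S / d * Y
            \<and> Re k2 = - S / d * X - C / d * Y"
  proof -
  define a where "a p = complex_of_real ((-1) ^ m p * A p)" for p
  define Lf where "Lf p t = complex_of_real (po_len N nb ell p t)" for p t
  define L1f where "L1f p t = complex_of_real (po_len N nb ell1 p t)" for p t
  define L2f where "L2f p t = complex_of_real (po_len N nb ell2 p t)" for p t
  define E where "E p t = exp (\<i> * k t * Lf p t)" for p t
  define F where "F t = (\<Sum>p\<in>P. a p * E p t)" for t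
  define G where "G t = (\<Sum>p\<in>P. a p * (E p t * (\<i> * (k1 t * Lf p t + k t * L1f p t))))" for t
  have B: "open (ball (0::real) \<delta>)" by simp
  have z: "(0::real) \<in> ball 0 \<delta>" using delta by simp
  have Ld: "(Lf p has_vector_derivative L1f p t) (at t)" if "t \<in> ball 0 \<delta>" for p t
    unfolding Lf_def L1f_def by (rule vd_polen) (use lengths that in auto)
  have L1d: "(L1f p has_vector_derivative L2f p t) (at t)" if "t \<in> ball 0 \<delta>" for p t
    unfolding L2f_def L1f_def by (rule vd_polen) (use lengths that in auto)
  have Ed: "(E p has_vector_derivative E p t * (\<i> * (k1 t * Lf p t + k t * L1f p t))) (at t)"
    if "t \<in> ball 0 \<delta>" for p t
  proof -
    have "((\<lambda>t. \<i> * k t * Lf p t) has_vector_derivative (\<i> * (k1 t * Lf p t + k t * L1f p t))) (at t)"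
      by (rule derivative_eq_intros Ld[OF that] kder[rule_format, OF that] | simp add: algebra_simps)+
    from vd_exp[OF this] show ?thesis unfolding E_def[abs_def] .
  qed
  have Fd: "(F has_vector_derivative G t) (at t)" if "t \<in> ball 0 \<delta>" for t
    unfolding F_def[abs_def] G_def
    by (rule derivative_eq_intros Ed[OF that] | simp)+
  have F0: "F t = 0" if "t \<in> ball 0 \<delta>" for t
    using reson that unfolding F_def E_def a_def Lf_def res_cond_def by (simp add: mult.assoc)
  have G0: "G t = 0" if "t \<in> ball 0 \<delta>" for t
  proof -
    have "((\<lambda>_. 0) has_vector_derivative 0) (at t)" by simp
    then have "(F has_vector_derivative 0) (at t)"
      by (rule has_vector_derivative_transform_within_open[OF _ B that]) (simp add: F0)
    then show ?thesis using vector_derivative_unique_at Fd[OF that] by blast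
  qed
  define M where "M p t = \<i> * (k1 t * Lf p t + k t * L1f p t)" for p t
  have Md: "(M p has_vector_derivative \<i> * (k2 * Lf p 0 + k1 0 * L1f p 0 + (k1 0 * L1f p 0 + k 0 * L2f p 0))) (at 0)" for p
    unfolding M_def[abs_def]
    by (rule derivative_eq_intros Ld[OF z] L1d[OF z] kder[rule_format, OF z] kder2 | simp add: algebra_simps)+
  have Gd: "(G has_vector_derivative (\<Sum>p\<in>P. a p * (E p 0 * (\<i> * (k2 * Lf p 0 + k1 0 * L1f p 0 + (k1 0 * L1f p 0 + k 0 * L2f p 0)))
        + E p 0 * M p 0 * M p 0))) (at 0)"
    unfolding G_def[abs_def] M_def[symmetric]
    apply (rule derivative_eq_intros Ed[OF z] Md | simp)+
    by (simp add: M_def algebra_simps)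
  have G'0: "(\<Sum>p\<in>P. a p * (E p 0 * (\<i> * (k2 * Lf p 0 + k1 0 * L1f p 0 + (k1 0 * L1f p 0 + k 0 * L2f p 0)))
        + E p 0 * M p 0 * M p 0)) = 0"
  proof -
    have "((\<lambda>_. 0) has_vector_derivative 0) (at 0)" by simp
    then have "(G has_vector_derivative 0) (at 0)"
      by (rule has_vector_derivative_transform_within_open[OF _ B z]) (simp add: G0)
    then show ?thesis using vector_derivative_unique_at Gd by blast
  qed
  have imk1: "Im (k1 0) = 0"
  proof (rule DERIV_local_max[OF vd_Im[OF kder[rule_format, OF z]] delta])
    show "\<forall>y. \<bar>0 - y\<bar> < \<delta> \<longrightarrow> Im (k y) \<le> Im (k 0)"
      using lowerhalf kinit by (simp add: dist_real_def)
  qed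
  define L where "L = (\<lambda>p. po_len N nb ell p 0)"
  define Ldv where "Ldv = (\<lambda>p. po_len N nb ell1 p 0)"
  define Lddv where "Lddv = (\<lambda>p. po_len N nb ell2 p 0)"
  define kd where "kd = Re (k1 0)"
  define x where "x = Re k2"
  define y where "y = Im k2"
  define ar where "ar p = (-1) ^ m p * A p" for p
  define c where "c p = cos (k0 * L p)" for p
  define s where "s p = sin (k0 * L p)" for p
  define u where "u p = kd * L p + k0 * Ldv p" for p
  define v where "v p = 2 * kd * Ldv p + k0 * Lddv p" for p
  have k10: "k1 0 = complex_of_real kd" using imk1 by (simp add: kd_def complex_eq_iff)
  have k2e: "k2 = complex_of_real x + \<i> * complex_of_real y" by (simp add: x_def y_def complex_eq_iff)
  have E0: "E p 0 = complex_of_real (c p) + \<i> * complex_of_real (s p)" for p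
    unfolding E_def Lf_def kinit c_def s_def L_def by (rule exp_cs)
  have t1: "a p * (E p 0 * (\<i> * (k1 0 * Lf p 0 + k 0 * L1f p 0)))
      = complex_of_real (- ar p * u p * s p) + \<i> * complex_of_real (ar p * u p * c p)" for p
    unfolding E0 k10 kinit a_def Lf_def L1f_def
    by (simp add: complex_eq_iff u_def ar_def L_def Ldv_def algebra_simps)
  have t2: "a p * (E p 0 * (\<i> * (k2 * Lf p 0 + k1 0 * L1f p 0 + (k1 0 * L1f p 0 + k 0 * L2f p 0)))
        + E p 0 * M p 0 * M p 0)
      = complex_of_real (ar p * (c p * (- y * L p - (u p)\<^sup>2) - s p * (x * L p + v p)))
        + \<i> * complex_of_real (ar p * (s p * (- y * L p - (u p)\<^sup>2) + c p * (x * L p + v p)))" for p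
    unfolding E0 k10 kinit a_def Lf_def L1f_def L2f_def M_def k2e
    by (simp add: complex_eq_iff u_def v_def ar_def L_def Ldv_def Lddv_def algebra_simps power2_eq_square)
  have e1: "(\<Sum>p\<in>P. ar p * u p * s p) = 0" and e2: "(\<Sum>p\<in>P. ar p * u p * c p) = 0"
  proof -
    have "G 0 = complex_of_real (\<Sum>p\<in>P. - ar p * u p * s p) + \<i> * complex_of_real (\<Sum>p\<in>P. ar p * u p * c p)"
      unfolding G_def t1 by (simp only: sum.distrib of_real_sum sum_distrib_left)
    then have "complex_of_real (\<Sum>p\<in>P. - ar p * u p * s p) + \<i> * complex_of_real (\<Sum>p\<in>P. ar p * u p * c p) = 0"
      using G0[OF z] by simp
    then show "(\<Sum>p\<in>P. ar p * u p * s p) = 0" "(\<Sum>p\<in>P. ar p * u p * c p) = 0"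
      by (simp_all add: complex_eq_iff sum_negf)
  qed
  have f1: "(\<Sum>p\<in>P. ar p * (c p * (- y * L p - (u p)\<^sup>2) - s p * (x * L p + v p))) = 0"
   and f2: "(\<Sum>p\<in>P. ar p * (s p * (- y * L p - (u p)\<^sup>2) + c p * (x * L p + v p))) = 0"
  proof -
    have "complex_of_real (\<Sum>p\<in>P. ar p * (c p * (- y * L p - (u p)\<^sup>2) - s p * (x * L p + v p)))
        + \<i> * complex_of_real (\<Sum>p\<in>P. ar p * (s p * (- y * L p - (u p)\<^sup>2) + c p * (x * L p + v p))) = 0"
      using G'0 unfolding t2 by (simp only: sum.distrib of_real_sum sum_distrib_left)
    then show "(\<Sum>p\<in>P. ar p * (c p * (- y * L p - (u p)\<^sup>2) - s p * (x * L p + v p))) = 0"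
       "(\<Sum>p\<in>P. ar p * (s p * (- y * L p - (u p)\<^sup>2) + c p * (x * L p + v p))) = 0"
      by (simp_all add: complex_eq_iff)
  qed
  define Cv where "Cv = C_sum P m A L k0"
  define Sv where "Sv = S_sum P m A L k0"
  define Dc where "Dc = (\<Sum>p\<in>P. Ldv p * (-1) ^ m p * A p * cos (k0 * L p))"
  define Xv where "Xv = X_sum P m A L Ldv Lddv k0 kd"
  define Yv where "Yv = Y_sum P m A L Ldv Lddv k0 kd"
  have Ce: "Cv = (\<Sum>p\<in>P. ar p * L p * c p)" unfolding Cv_def C_sum_def ar_def c_def
    by (rule sum.cong) auto
  have Se: "Sv = (\<Sum>p\<in>P. ar p * L p * s p)" unfolding Sv_def S_sum_def ar_def s_def
    by (rule sum.cong) auto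
  have Xe: "Xv = (\<Sum>p\<in>P. ar p * ((u p)\<^sup>2 * c p + v p * s p))"
    unfolding Xv_def X_sum_def
    by (simp add: sum_distrib_left sum.distrib[symmetric] u_def v_def ar_def c_def s_def
        power2_eq_square algebra_simps)
  have Ye: "Yv = (\<Sum>p\<in>P. ar p * (v p * c p - (u p)\<^sup>2 * s p))"
    unfolding Yv_def Y_sum_def
    by (simp add: sum_distrib_left sum.distrib[symmetric] sum_subtractf[symmetric] u_def v_def ar_def c_def s_def
        power2_eq_square algebra_simps)
  have r1: "kd * Cv + k0 * Dc = 0"
  proof -
    have "kd * Cv + k0 * Dc = (\<Sum>p\<in>P. ar p * u p * c p)"
      unfolding Ce Dc_def by (simp add: sum_distrib_left sum.distrib[symmetric] u_def ar_def c_def algebra_simps)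
    then show ?thesis using e2 by simp
  qed
  have r2: "- Xv - y * Cv - x * Sv = 0"
  proof -
    have "- Xv - y * Cv - x * Sv = (\<Sum>p\<in>P. ar p * (c p * (- y * L p - (u p)\<^sup>2) - s p * (x * L p + v p)))"
      unfolding Ce Se Xe by (simp add: sum_distrib_left sum.distrib[symmetric] sum_subtractf[symmetric] sum_negf[symmetric] algebra_simps) (rule sum.cong; simp add: algebra_simps)
    then show ?thesis using f1 by simp
  qed
  have r3: "Yv - y * Sv + x * Cv = 0"
  proof -
    have "Yv - y * Sv + x * Cv = (\<Sum>p\<in>P. ar p * (s p * (- y * L p - (u p)\<^sup>2) + c p * (x * L p + v p)))"
      unfolding Ce Se Ye by (simp add: sum_distrib_left sum.distrib[symmetric] sum_subtractf[symmetric] sum_negf[symmetric] algebra_simps)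
    then show ?thesis using f2 by simp
  qed
  have dnz: "Cv\<^sup>2 + Sv\<^sup>2 \<noteq> 0" using nondeg unfolding Cv_def Sv_def L_def .
  have hX: "Xv = - y*Cv - x*Sv" using r2 by linarith
  have hY: "Yv = y*Sv - x*Cv" using r3 by linarith
  have "y*(Cv\<^sup>2+Sv\<^sup>2) = -Cv*Xv + Sv*Yv" unfolding hX hY by (simp add: algebra_simps power2_eq_square)
  then have "y = (-Cv*Xv + Sv*Yv)/(Cv\<^sup>2+Sv\<^sup>2)" using dnz by (simp add: eq_divide_eq)
  also have "\<dots> = - Cv / (Cv\<^sup>2 + Sv\<^sup>2) * Xv + Sv / (Cv\<^sup>2 + Sv\<^sup>2) * Yv" by (simp add: add_divide_distrib diff_divide_distrib)
  finally have yv: "y = - Cv / (Cv\<^sup>2 + Sv\<^sup>2) * Xv + Sv / (Cv\<^sup>2 + Sv\<^sup>2) * Yv" .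
  have "x*(Cv\<^sup>2+Sv\<^sup>2) = -Sv*Xv - Cv*Yv" unfolding hX hY by (simp add: algebra_simps power2_eq_square)
  then have "x = (-Sv*Xv - Cv*Yv)/(Cv\<^sup>2+Sv\<^sup>2)" using dnz by (simp add: eq_divide_eq)
  also have "\<dots> = - Sv / (Cv\<^sup>2 + Sv\<^sup>2) * Xv - Cv / (Cv\<^sup>2 + Sv\<^sup>2) * Yv" by (simp add: diff_divide_distrib)
  finally have xv: "x = - Sv / (Cv\<^sup>2 + Sv\<^sup>2) * Xv - Cv / (Cv\<^sup>2 + Sv\<^sup>2) * Yv" .
  have kd1: "Cv \<noteq> 0 \<longrightarrow> k1 0 = complex_of_real (- k0 * Dc / Cv)"
  proof
    assume "Cv \<noteq> 0"
    then have "kd = - k0 * Dc / Cv" using r1 by (simp add: field_simps)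
    then show "k1 0 = complex_of_real (- k0 * Dc / Cv)" using k10 by simp
  qed
  show ?thesis
    unfolding Let_def
    using imk1 kd1 yv xv
    unfolding Cv_def Sv_def Xv_def Yv_def Dc_def L_def Ldv_def Lddv_def kd_def x_def y_def
    by simp
qed
end
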